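(* Let $P$ be a pattern and $M$ a $P$-avoiding matrix. Let $z$ be a horizontal 0-run of $M$ and $f\in z$ a 0-entry of this run. Assume there is an embedding $\phi$ of $P$ into $M\Delta f$. Then $P$ has a 1-entry $e$ with $\phi(e)=f$, and moreover every entry of $P$ in the same column as $e$ is mapped by $\phi$ to a column of $M$ that contains an entry of $z$.
   Context: All matrices are binary; rows numbered top to bottom, columns left to right; $(i,j)$ is the entry in row $i$, column $j$; $[k]=\{1,\dots,k\}$. $M\Delta f$ denotes the matrix obtained from $M$ by switching the value of entry $f$. A horizontal 0-run is a maximal set of consecutive 0-entries within one row. An embedding of $P\in\{0,1\}^{k\times\ell}$ into $M\in\{0,1\}^{m\times n}$ is a map $\phi:[k]\times[\ell]\to[m]\times[n]$ sending 1-entries of $P$ to 1-entries of $M$ such that if $e_1=(i_1,j_1)$, $e_2=(i_2,j_2)$ with $\phi(e_1)=(i_1^*,j_1^* )$, $\phi(e_2)=(i_2^*,j_2^* )$, then $i_1<i_2$ implies $i_1^*<i_2^*$ and $j_1<j_2$ implies $j_1^*<j_2^*$. $M$ is $P$-avoiding if there is no embedding of $P$ into $M$ (equivalently, $P$ is not an interval minor of $M$). *)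

theory Defs
  imports Main
begin

text \<open>A binary m x n matrix is a function on index pairs (row, column); only entries in
  {1..m} x {1..n} matter. True = 1-entry, False = 0-entry.\<close>

definition entries :: "nat \<Rightarrow> nat \<Rightarrow> (nat \<times> nat) set" where
  "entries m n = {1..m} \<times> {1..n}"

definition flip :: "(nat \<times> nat \<Rightarrow> bool) \<Rightarrow> nat \<times> nat \<Rightarrow> (nat \<times> nat \<Rightarrow> bool)" where
  "flip M f = M(f := \<not> M f)"

definition embedding ::
  "(nat \<times> nat \<Rightarrow> bool) \<Rightarrow> nat \<Rightarrow> nat \<Rightarrow> (nat \<times> nat \<Rightarrow> bool) \<Rightarrow> nat \<Rightarrow> nat
   \<Rightarrow> (nat \<times> nat \<Rightarrow> nat \<times> nat) \<Rightarrow> bool" where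
  "embedding P k l M m n \<phi> \<longleftrightarrow>
     (\<forall>e\<in>entries k l. \<phi> e \<in> entries m n) \<and>
     (\<forall>e\<in>entries k l. P e \<longrightarrow> M (\<phi> e)) \<and>
     (\<forall>e1\<in>entries k l. \<forall>e2\<in>entries k l.
        (fst e1 < fst e2 \<longrightarrow> fst (\<phi> e1) < fst (\<phi> e2)) \<and>
        (snd e1 < snd e2 \<longrightarrow> snd (\<phi> e1) < snd (\<phi> e2)))"

definition avoids ::
  "(nat \<times> nat \<Rightarrow> bool) \<Rightarrow> nat \<Rightarrow> nat \<Rightarrow> (nat \<times> nat \<Rightarrow> bool) \<Rightarrow> nat \<Rightarrow> nat \<Rightarrow> bool" where
  "avoids P k l M m n \<longleftrightarrow> \<not> (\<exists>\<phi>. embedding P k l M m n \<phi>)"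

definition hzero_run ::
  "(nat \<times> nat \<Rightarrow> bool) \<Rightarrow> nat \<Rightarrow> nat \<Rightarrow> (nat \<times> nat) set \<Rightarrow> bool" where
  "hzero_run M m n z \<longleftrightarrow>
     (\<exists>i a b. i \<in> {1..m} \<and> 1 \<le> a \<and> a \<le> b \<and> b \<le> n \<and> z = {i} \<times> {a..b} \<and>
        (\<forall>j\<in>{a..b}. \<not> M (i, j)) \<and>
        (a = 1 \<or> M (i, a - 1)) \<and> (b = n \<or> M (i, b + 1)))"

end

theory Submission
  imports Defs
begin

theorem lemma3p7:
  fixes P M :: "nat \<times> nat \<Rightarrow> bool" and k l m n :: nat
    and z :: "(nat \<times> nat) set" and f :: "nat \<times> nat"
    and \<phi> :: "nat \<times> nat \<Rightarrow> nat \<times> nat"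
  assumes "avoids P k l M m n"
    and "hzero_run M m n z"
    and "f \<in> z"
    and "embedding P k l (flip M f) m n \<phi>"
  shows "\<exists>e\<in>entries k l. P e \<and> \<phi> e = f \<and>
           (\<forall>i\<in>{1..k}. \<exists>g\<in>z. snd g = snd (\<phi> (i, snd e)))"
proof -
  obtain r a b where r: "r \<in> {1..m}" and ab: "1 \<le> a" "a \<le> b" "b \<le> n"
    and zdef: "z = {r} \<times> {a..b}" and zero: "\<forall>j\<in>{a..b}. \<not> M (r, j)"
    and left: "a = 1 \<or> M (r, a - 1)" and right: "b = n \<or> M (r, b + 1)"
    using assms(2) unfolding hzero_run_def by blast
  have Mf: "\<not> M f" using assms(3) zero zdef by auto
  have emb1: "\<forall>e\<in>entries k l. \<phi> e \<in> entries m n"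
    and emb2: "\<forall>e\<in>entries k l. P e \<longrightarrow> flip M f (\<phi> e)"
    and emb3: "\<forall>e1\<in>entries k l. \<forall>e2\<in>entries k l.
        (fst e1 < fst e2 \<longrightarrow> fst (\<phi> e1) < fst (\<phi> e2)) \<and>
        (snd e1 < snd e2 \<longrightarrow> snd (\<phi> e1) < snd (\<phi> e2))"
    using assms(4) unfolding embedding_def by auto
  have notemb: "\<And>\<psi>. \<not> embedding P k l M m n \<psi>" using assms(1) unfolding avoids_def by blast
  obtain e where e: "e \<in> entries k l" "P e" "\<phi> e = f"
  proof -
    have "\<not> (\<forall>e\<in>entries k l. P e \<longrightarrow> M (\<phi> e))"
      using notemb[of \<phi>] emb1 emb3 unfolding embedding_def by blast
    then obtain e where "e \<in> entries k l" "P e" "\<not> M (\<phi> e)" by blast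
    moreover have "\<phi> e = f" using emb2 calculation unfolding flip_def
      by (metis fun_upd_other)
    ultimately show ?thesis using that by blast
  qed
  have uniq: "\<And>e'. e' \<in> entries k l \<Longrightarrow> e' \<noteq> e \<Longrightarrow> \<phi> e' \<noteq> f"
  proof -
    fix e' assume h: "e' \<in> entries k l" "e' \<noteq> e"
    then have "fst e' \<noteq> fst e \<or> snd e' \<noteq> snd e" by (auto simp: prod_eq_iff)
    then show "\<phi> e' \<noteq> f"
      using emb3 h(1) e(1) e(3) by (metis less_irrefl nat_neq_iff)
  qed
  have fr: "f = (r, snd f)" "snd f \<in> {a..b}" using assms(3) zdef by auto
  let ?j = "snd e"
  have "\<forall>i\<in>{1..k}. \<exists>g\<in>z. snd g = snd (\<phi> (i, ?j))"
  proof
    fix i assume i: "i \<in> {1..k}"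
    have ie: "(i, ?j) \<in> entries k l" using i e(1) unfolding entries_def by auto
    let ?c = "snd (\<phi> (i, ?j))"
    have key: "\<And>t. t \<in> entries m n \<Longrightarrow> M t \<Longrightarrow> fst t = r \<Longrightarrow>
        (\<forall>e1\<in>entries k l. snd e1 < ?j \<longrightarrow> snd (\<phi> e1) < snd t) \<Longrightarrow>
        (\<forall>e1\<in>entries k l. ?j < snd e1 \<longrightarrow> snd t < snd (\<phi> e1)) \<Longrightarrow> False"
    proof -
      fix t assume t: "t \<in> entries m n" "M t" "fst t = r"
        and lt: "\<forall>e1\<in>entries k l. snd e1 < ?j \<longrightarrow> snd (\<phi> e1) < snd t"
        and gt: "\<forall>e1\<in>entries k l. ?j < snd e1 \<longrightarrow> snd t < snd (\<phi> e1)"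
      let ?\<psi> = "\<phi>(e := t)"
      have "embedding P k l M m n ?\<psi>"
        unfolding embedding_def
      proof (intro conjI ballI impI)
        fix e1 assume "e1 \<in> entries k l" then show "?\<psi> e1 \<in> entries m n"
          using emb1 t(1) by auto
      next
        fix e1 assume h: "e1 \<in> entries k l" "P e1"
        show "M (?\<psi> e1)"
        proof (cases "e1 = e")
          case True then show ?thesis using t by simp
        next
          case False
          then have "\<phi> e1 \<noteq> f" using uniq h by blast
          then show ?thesis using emb2 h unfolding flip_def using False by auto
        qed
      next
        fix e1 e2 assume h: "e1 \<in> entries k l" "e2 \<in> entries k l" "fst e1 < fst e2"
        show "fst (?\<psi> e1) < fst (?\<psi> e2)"
          using emb3 h e t fr by (cases "e1 = e"; cases "e2 = e"; auto; metis fst_conv)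
      next
        fix e1 e2 assume h: "e1 \<in> entries k l" "e2 \<in> entries k l" "snd e1 < snd e2"
        show "snd (?\<psi> e1) < snd (?\<psi> e2)"
          using emb3 h e lt gt by (cases "e1 = e"; cases "e2 = e"; auto)
      qed
      then show False using notemb by blast
    qed
    have "a \<le> ?c"
    proof (rule ccontr)
      assume ca: "\<not> a \<le> ?c"
      have "\<phi> (i, ?j) \<in> entries m n" using emb1 ie by blast
      then have "1 \<le> ?c" unfolding entries_def by (auto simp: mem_Times_iff)
      then have a1: "a \<noteq> 1" using ab ca by auto
      show False
      proof (rule key[of "(r, a - 1)"])
        show "(r, a - 1) \<in> entries m n" using r ab a1 unfolding entries_def by auto
        show "M (r, a - 1)" using left a1 by auto
        show "fst (r, a - 1) = r" by simp
        show "\<forall>e1\<in>entries k l. snd e1 < ?j \<longrightarrow> snd (\<phi> e1) < snd (r, a - 1)"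
        proof (intro ballI impI)
          fix e1 assume "e1 \<in> entries k l" "snd e1 < ?j"
          then have "snd (\<phi> e1) < ?c" using emb3 ie by (metis snd_conv)
          then show "snd (\<phi> e1) < snd (r, a - 1)" using ca by auto
        qed
        show "\<forall>e1\<in>entries k l. ?j < snd e1 \<longrightarrow> snd (r, a - 1) < snd (\<phi> e1)"
        proof (intro ballI impI)
          fix e1 assume "e1 \<in> entries k l" "?j < snd e1"
          then have "snd f < snd (\<phi> e1)" using emb3 e by metis
          then show "snd (r, a - 1) < snd (\<phi> e1)" using fr ab by auto
        qed
      qed
    qed
    moreover have "?c \<le> b"
    proof (rule ccontr)
      assume cb: "\<not> ?c \<le> b"
      have "\<phi> (i, ?j) \<in> entries m n" using emb1 ie by blast
      then have c_le: "?c \<le> n" unfolding entries_def by (auto simp: mem_Times_iff)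
      then have bn: "b \<noteq> n" using cb by auto
      show False
      proof (rule key[of "(r, b + 1)"])
        show "(r, b + 1) \<in> entries m n" using r ab bn cb c_le unfolding entries_def by auto
        show "M (r, b + 1)" using right bn by auto
        show "fst (r, b + 1) = r" by simp
        show "\<forall>e1\<in>entries k l. ?j < snd e1 \<longrightarrow> snd (r, b + 1) < snd (\<phi> e1)"
        proof (intro ballI impI)
          fix e1 assume "e1 \<in> entries k l" "?j < snd e1"
          then have "?c < snd (\<phi> e1)" using emb3 ie by (metis snd_conv)
          then show "snd (r, b + 1) < snd (\<phi> e1)" using cb by auto
        qed
        show "\<forall>e1\<in>entries k l. snd e1 < ?j \<longrightarrow> snd (\<phi> e1) < snd (r, b + 1)"
        proof (intro ballI impI)
          fix e1 assume "e1 \<in> entries k l" "snd e1 < ?j"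
          then have "snd (\<phi> e1) < snd f" using emb3 e by metis
          then show "snd (\<phi> e1) < snd (r, b + 1)" using fr ab by auto
        qed
      qed
    qed
    ultimately show "\<exists>g\<in>z. snd g = ?c" using zdef by auto
  qed
  then show ?thesis using e by blast
qed

end
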